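(* Let $\rho>0$ and for an indexed family $\xi=(\xi_{l,m,n})_{(l,m,n)\in\mathbb{Z}_+^3\setminus\{\mathbf 0\}}$ define $\mathcal T\xi_{l,m,n}=\frac{n\rho}{2}\xi_{l+1,m+1,n-1}+\frac{l(l-1+2n)}{2}\xi_{l-1,m,n}+\frac{m(m-1+2n)}{2}\xi_{l,m-1,n}+\frac{n(n-1)}{2}\xi_{l,m,n-1}+lm\,\xi_{l-1,m-1,n+1}$, where terms with a negative index are zero. For any $R,K\in\mathbb{Z}_+$ and any $(l,m,n)$ of rank at most $R$ and class at most $K$, $\mathcal T\xi_{l,m,n}$ is a linear combination of entries $\xi_{l',m',n'}$ whose rank is at most $R$ and class at most $K$ (i.e. the span of moments of rank $\le R$ and class $\le K$ is closed under $\mathcal T$). Moreover the indices $(l+1,m+1,n-1)$ (recombination term) and $(l-1,m-1,n+1)$ (null coalescence term) have the same rank and class as $(l,m,n)$.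
   Context: The rank of $(l,m,n)\in\mathbb{Z}_+^3$ (equivalently of the moment $\mathbb{E}[x^l y^m x_1^n]$) is $l+m+2n$ and its class is $n+\min\{l,m\}$. *)

theory Defs
  imports Complex_Main
begin

definition rank :: "nat \<times> nat \<times> nat \<Rightarrow> nat" where
  "rank i = (case i of (l, m, n) \<Rightarrow> l + m + 2 * n)"

definition cls :: "nat \<times> nat \<times> nat \<Rightarrow> nat" where
  "cls i = (case i of (l, m, n) \<Rightarrow> n + min l m)"

text \<open>A family xi indexed by Z_+^3 minus 0 is represented as a
function on all triples (its value at (0,0,0) only ever enters with coefficient 0).\<close>

definition Top :: "real \<Rightarrow> (nat \<times> nat \<times> nat \<Rightarrow> real) \<Rightarrow> nat \<times> nat \<times> nat \<Rightarrow> real" where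
  "Top \<rho> \<xi> i = (case i of (l, m, n) \<Rightarrow>
      (if n \<ge> 1 then real n * \<rho> / 2 * \<xi> (l + 1, m + 1, n - 1) else 0)
    + (if l \<ge> 1 then real l * (real l - 1 + 2 * real n) / 2 * \<xi> (l - 1, m, n) else 0)
    + (if m \<ge> 1 then real m * (real m - 1 + 2 * real n) / 2 * \<xi> (l, m - 1, n) else 0)
    + (if n \<ge> 1 then real n * (real n - 1) / 2 * \<xi> (l, m, n - 1) else 0)
    + (if l \<ge> 1 \<and> m \<ge> 1 then real l * real m * \<xi> (l - 1, m - 1, n + 1) else 0))"

end

theory Submission
  imports Defs
begin

theorem mainTheorem2:
  fixes \<rho> :: real and R K l m n :: nat
  assumes "\<rho> > 0"
    and "(l, m, n) \<noteq> (0, 0, 0)"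
    and "rank (l, m, n) \<le> R" and "cls (l, m, n) \<le> K"
  shows "(\<exists>S :: (nat \<times> nat \<times> nat) set. \<exists>c :: nat \<times> nat \<times> nat \<Rightarrow> real.
            finite S \<and>
            (\<forall>j\<in>S. j \<noteq> (0, 0, 0) \<and> rank j \<le> R \<and> cls j \<le> K) \<and>
            (\<forall>\<xi>. Top \<rho> \<xi> (l, m, n) = (\<Sum>j\<in>S. c j * \<xi> j)))
       \<and> (n \<ge> 1 \<longrightarrow> rank (l + 1, m + 1, n - 1) = rank (l, m, n)
                    \<and> cls (l + 1, m + 1, n - 1) = cls (l, m, n))
       \<and> (l \<ge> 1 \<and> m \<ge> 1 \<longrightarrow> rank (l - 1, m - 1, n + 1) = rank (l, m, n)
                    \<and> cls (l - 1, m - 1, n + 1) = cls (l, m, n))"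
proof -
  define A where "A = (if n \<ge> 1 then {(l + 1, m + 1, n - 1)} else {})"
  define B where "B = (if l \<ge> 1 \<and> (l - 1, m, n) \<noteq> (0,0,0) then {(l - 1, m, n)} else {})"
  define C where "C = (if m \<ge> 1 \<and> (l, m - 1, n) \<noteq> (0,0,0) then {(l, m - 1, n)} else {})"
  define D where "D = (if n \<ge> 1 \<and> (l, m, n - 1) \<noteq> (0,0,0) then {(l, m, n - 1)} else {})"
  define E where "E = (if l \<ge> 1 \<and> m \<ge> 1 then {(l - 1, m - 1, n + 1)} else {})"
  define c :: "nat \<times> nat \<times> nat \<Rightarrow> real" where "c j = (if j = (l + 1, m + 1, n - 1) then real n * \<rho> / 2
     else if j = (l - 1, m, n) then real l * (real l - 1 + 2 * real n) / 2
     else if j = (l, m - 1, n) then real m * (real m - 1 + 2 * real n) / 2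
     else if j = (l, m, n - 1) then real n * (real n - 1) / 2
     else real l * real m)" for j
  have c1: "c (l + 1, m + 1, n - 1) = real n * \<rho> / 2" unfolding c_def by simp
  have c2: "c (l - 1, m, n) = real l * (real l - 1 + 2 * real n) / 2" if "l \<ge> 1"
  proof -
    have h1: "(l - 1, m, n) \<noteq> (l + 1, m + 1, n - 1)" by simp
    show ?thesis unfolding c_def by (simp only: if_not_P[OF h1] if_P[OF refl])
  qed
  have c3: "c (l, m - 1, n) = real m * (real m - 1 + 2 * real n) / 2" if "m \<ge> 1"
  proof -
    have h1: "(l, m - 1, n) \<noteq> (l + 1, m + 1, n - 1)" by simp
    have h2: "(l, m - 1, n) \<noteq> (l - 1, m, n)" using that by auto
    show ?thesis unfolding c_def by (simp only: if_not_P[OF h1] if_not_P[OF h2] if_P[OF refl])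
  qed
  have c4: "c (l, m, n - 1) = real n * (real n - 1) / 2" if "n \<ge> 1"
  proof -
    have h1: "(l, m, n - 1) \<noteq> (l + 1, m + 1, n - 1)" by simp
    have h2: "(l, m, n - 1) \<noteq> (l - 1, m, n)" using that by auto
    have h3: "(l, m, n - 1) \<noteq> (l, m - 1, n)" using that by auto
    show ?thesis unfolding c_def by (simp only: if_not_P[OF h1] if_not_P[OF h2] if_not_P[OF h3] if_P[OF refl])
  qed
  have c5: "c (l - 1, m - 1, n + 1) = real l * real m" if "l \<ge> 1" "m \<ge> 1"
  proof -
    have h1: "(l - 1, m - 1, n + 1) \<noteq> (l + 1, m + 1, n - 1)" using that by auto
    have h2: "(l - 1, m - 1, n + 1) \<noteq> (l - 1, m, n)" using that by auto
    have h3: "(l - 1, m - 1, n + 1) \<noteq> (l, m - 1, n)" using that by auto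
    have h4: "(l - 1, m - 1, n + 1) \<noteq> (l, m, n - 1)" using that by auto
    show ?thesis unfolding c_def by (simp only: if_not_P[OF h1] if_not_P[OF h2] if_not_P[OF h3] if_not_P[OF h4] if_P[OF refl])
  qed
  have fin: "finite (A \<union> B \<union> C \<union> D \<union> E)" unfolding A_def B_def C_def D_def E_def by auto
  have r: "l + m + 2 * n \<le> R" and k: "n + min l m \<le> K"
    using assms(3,4) unfolding rank_def cls_def by simp_all
  have mA: "\<forall>j\<in>A. j \<noteq> (0, 0, 0) \<and> rank j \<le> R \<and> cls j \<le> K"
  proof (cases "n \<ge> 1")
    case True
    have "min (l + 1) (m + 1) = min l m + 1" by (simp add: min_def)
    then show ?thesis unfolding A_def rank_def cls_def using r k True by simp
  next
    case False
    then have "A = {}" unfolding A_def by (simp only: if_not_P if_False)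
    then show ?thesis by simp
  qed
  have mB: "\<forall>j\<in>B. j \<noteq> (0, 0, 0) \<and> rank j \<le> R \<and> cls j \<le> K"
  proof (cases "l \<ge> 1 \<and> (l - 1, m, n) \<noteq> (0,0,0)")
    case True
    have "min (l - 1) m \<le> min l m" by (auto simp: min_def)
    then have "n + min (l - 1) m \<le> K" "l - 1 + m + 2 * n \<le> R" using k r by linarith+
    then show ?thesis unfolding B_def rank_def cls_def using r k True by simp
  next
    case False
    then have "B = {}" unfolding B_def by (simp only: if_not_P if_False)
    then show ?thesis by simp
  qed
  have mC: "\<forall>j\<in>C. j \<noteq> (0, 0, 0) \<and> rank j \<le> R \<and> cls j \<le> K"
  proof (cases "m \<ge> 1 \<and> (l, m - 1, n) \<noteq> (0,0,0)")
    case True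
    have "min l (m - 1) \<le> min l m" by (auto simp: min_def)
    then have "n + min l (m - 1) \<le> K" "l + (m - 1) + 2 * n \<le> R" using k r by linarith+
    then show ?thesis unfolding C_def rank_def cls_def using r k True by simp
  next
    case False
    then have "C = {}" unfolding C_def by (simp only: if_not_P if_False)
    then show ?thesis by simp
  qed
  have mD: "\<forall>j\<in>D. j \<noteq> (0, 0, 0) \<and> rank j \<le> R \<and> cls j \<le> K"
  proof (cases "n \<ge> 1 \<and> (l, m, n - 1) \<noteq> (0,0,0)")
    case True
    then have "n - 1 + min l m \<le> K" "l + m + 2 * (n - 1) \<le> R" using k r by linarith+
    then show ?thesis unfolding D_def rank_def cls_def using True by simp
  next
    case False
    then have "D = {}" unfolding D_def by (simp only: if_not_P if_False)
    then show ?thesis by simp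
  qed
  have mE: "\<forall>j\<in>E. j \<noteq> (0, 0, 0) \<and> rank j \<le> R \<and> cls j \<le> K"
  proof (cases "l \<ge> 1 \<and> m \<ge> 1")
    case True
    have "min (l - 1) (m - 1) + 1 = min l m" using True by (auto simp: min_def)
    obtain a b where ab: "l = Suc a" "m = Suc b" using True by (metis One_nat_def Suc_le_D)
    have e1: "l - 1 + (m - 1) + 2 * (n + 1) = l + m + 2 * n" unfolding ab by simp
    have e2: "n + 1 + min (l - 1) (m - 1) = n + min l m" using \<open>min (l - 1) (m - 1) + 1 = min l m\<close> by simp
    have "n + 1 + min (l - 1) (m - 1) \<le> K" "l - 1 + (m - 1) + 2 * (n + 1) \<le> R"
      unfolding e1 e2 using k r by simp_all
    then show ?thesis unfolding E_def rank_def cls_def using True by simp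
  next
    case False
    then have "E = {}" unfolding E_def by (simp only: if_not_P if_False)
    then show ?thesis by simp
  qed
  have mem: "\<forall>j\<in>A \<union> B \<union> C \<union> D \<union> E. j \<noteq> (0, 0, 0) \<and> rank j \<le> R \<and> cls j \<le> K"
    unfolding ball_Un using mA mB mC mD mE by (simp only: conj_assoc)
  have eq: "Top \<rho> \<xi> (l, m, n) = (\<Sum>j\<in>A \<union> B \<union> C \<union> D \<union> E. c j * \<xi> j)" for \<xi>
  proof -
    have d: "A \<inter> B = {}" "(A \<union> B) \<inter> C = {}" "(A \<union> B \<union> C) \<inter> D = {}" "(A \<union> B \<union> C \<union> D) \<inter> E = {}"
      unfolding A_def B_def C_def D_def E_def by auto
    have "(\<Sum>j\<in>A \<union> B \<union> C \<union> D \<union> E. c j * \<xi> j) =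
      (\<Sum>j\<in>A. c j * \<xi> j) + (\<Sum>j\<in>B. c j * \<xi> j) + (\<Sum>j\<in>C. c j * \<xi> j) + (\<Sum>j\<in>D. c j * \<xi> j) + (\<Sum>j\<in>E. c j * \<xi> j)"
      using d fin by (simp add: sum.union_disjoint)
    also have "\<dots> = Top \<rho> \<xi> (l, m, n)"
    proof -
      have a: "(\<Sum>j\<in>A. c j * \<xi> j) = (if n \<ge> 1 then real n * \<rho> / 2 * \<xi> (l + 1, m + 1, n - 1) else 0)"
        unfolding A_def using c1 by simp
      have b: "(\<Sum>j\<in>B. c j * \<xi> j) = (if l \<ge> 1 then real l * (real l - 1 + 2 * real n) / 2 * \<xi> (l - 1, m, n) else 0)"
      proof (cases "l \<ge> 1 \<and> (l - 1, m, n) \<noteq> (0,0,0)")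
        case True then show ?thesis unfolding B_def using c2 True by simp
      next
        case False then show ?thesis unfolding B_def by (cases "l \<ge> 1") auto
      qed
      have cc: "(\<Sum>j\<in>C. c j * \<xi> j) = (if m \<ge> 1 then real m * (real m - 1 + 2 * real n) / 2 * \<xi> (l, m - 1, n) else 0)"
      proof (cases "m \<ge> 1 \<and> (l, m - 1, n) \<noteq> (0,0,0)")
        case True then show ?thesis unfolding C_def using c3 True by simp
      next
        case False then show ?thesis unfolding C_def by (cases "m \<ge> 1") auto
      qed
      have dd: "(\<Sum>j\<in>D. c j * \<xi> j) = (if n \<ge> 1 then real n * (real n - 1) / 2 * \<xi> (l, m, n - 1) else 0)"
      proof (cases "n \<ge> 1 \<and> (l, m, n - 1) \<noteq> (0,0,0)")
        case True then show ?thesis unfolding D_def using c4 True by simp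
      next
        case False then show ?thesis unfolding D_def by (cases "n \<ge> 1") auto
      qed
      have e: "(\<Sum>j\<in>E. c j * \<xi> j) = (if l \<ge> 1 \<and> m \<ge> 1 then real l * real m * \<xi> (l - 1, m - 1, n + 1) else 0)"
        unfolding E_def using c5 by simp
      show ?thesis unfolding a b cc dd e Top_def by simp
    qed
    finally show ?thesis by simp
  qed
  have "\<exists>S :: (nat \<times> nat \<times> nat) set. \<exists>c :: nat \<times> nat \<times> nat \<Rightarrow> real.
            finite S \<and>
            (\<forall>j\<in>S. j \<noteq> (0, 0, 0) \<and> rank j \<le> R \<and> cls j \<le> K) \<and>
            (\<forall>\<xi>. Top \<rho> \<xi> (l, m, n) = (\<Sum>j\<in>S. c j * \<xi> j))"
    by (rule exI[of _ "A \<union> B \<union> C \<union> D \<union> E"], rule exI[of _ c], intro conjI allI fin mem eq)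
  moreover have "n \<ge> 1 \<longrightarrow> rank (l + 1, m + 1, n - 1) = rank (l, m, n)
                    \<and> cls (l + 1, m + 1, n - 1) = cls (l, m, n)"
  proof
    assume "n \<ge> 1"
    then obtain a where "n = Suc a" by (metis One_nat_def Suc_le_D)
    then show "rank (l + 1, m + 1, n - 1) = rank (l, m, n) \<and> cls (l + 1, m + 1, n - 1) = cls (l, m, n)"
      unfolding rank_def cls_def by (simp add: min_def)
  qed
  moreover have "l \<ge> 1 \<and> m \<ge> 1 \<longrightarrow> rank (l - 1, m - 1, n + 1) = rank (l, m, n)
                    \<and> cls (l - 1, m - 1, n + 1) = cls (l, m, n)"
  proof
    assume "l \<ge> 1 \<and> m \<ge> 1"
    then obtain a b where "l = Suc a" "m = Suc b" by (metis One_nat_def Suc_le_D)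
    then show "rank (l - 1, m - 1, n + 1) = rank (l, m, n) \<and> cls (l - 1, m - 1, n + 1) = cls (l, m, n)"
      unfolding rank_def cls_def by (simp add: min_def)
  qed
  ultimately show ?thesis by (rule conjI[OF _ conjI])
qed

end
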